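(* Let $G=(V,E,\mathcal{W})$ be a coherent matrix-weighted network as described in the context whose underlying undirected graph is not bipartite, and consider the random walk dynamics $\mathbf{y}_j(t+1)=\sum_i \mathbf{W}_{ij}^T\mathbf{y}_i(t)/d_i$, $j=1,\dots,n$, i.e. $\mathbf{y}(t+1)=\mathcal{P}^T\mathbf{y}(t)$ with $\mathcal{P}=\mathcal{D}^{-1}\mathcal{W}$ and $\mathbf{y}=(\mathbf{y}_1;\dots;\mathbf{y}_n)$, $\mathbf{y}_i\in\mathbb{R}^{n_d}$, with initial vectors $\mathbf{y}_i(0)$. Then for each node $v_j$, $\mathbf{y}_j(t)\to\mathbf{y}_j^*$ as $t\to\infty$, where $$\mathbf{y}_j^{*T}=\bar{\mathbf{y}}(0)^T\mathbf{S}_{1\sigma(j)}\,d_j/(2m),\qquad \bar{\mathbf{y}}(0)^T=\sum_{i=1}^n\mathbf{y}_i(0)^T\mathbf{S}_{\sigma(i)1},\qquad 2m=\sum_j d_j.$$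
   Context: A matrix-weighted network (MWN) is $G=(V,E,\mathcal{W})$ with node set $V=\{v_1,\dots,v_n\}$ and edge set $E\subset V\times V$, whose underlying graph is connected. For a fixed dimension $n_d$, each ordered pair $(i,j)$ carries $\mathbf{W}_{ij}\in\mathbb{R}^{n_d\times n_d}$, with $\mathbf{W}_{ij}=0$ iff $(v_i,v_j)\notin E$, and $\mathbf{W}_{ij}=\mathbf{W}_{ji}^T$. Write $w_{ij}=\|\mathbf{W}_{ij}\|_2$ and, for edges, $\mathbf{R}_{ij}=\mathbf{W}_{ij}/w_{ij}$ (transformation of the edge). $\mathcal{W}$ is the $nn_d\times nn_d$ block matrix with blocks $\mathbf{W}_{ij}$; $d_i=\sum_j w_{ij}$, $\mathcal{D}=\mathrm{diag}(d_i)\otimes\mathbf{I}$ ($\mathbf{I}$ the $n_d\times n_d$ identity). The transformation of a directed path or cycle with consecutive edges $e_1,\dots,e_k$ is $\mathbf{R}(e_1)\cdots\mathbf{R}(e_k)$; $G$ is coherent if every directed cycle $(v_{i_1},v_{i_2}),\dots,(v_{i_l},v_{i_1})$ ($l\ge2$, distinct nodes) has transformation $\mathbf{I}$. For coherent $G$ there is a partition $\{V_1,\dots,V_{l_p}\}$ of $V$ such that edges inside a part have transformation $\mathbf{I}$, all edges from a part $V_a$ to a part $V_b$ share the same transformation, and every directed cycle of parts (as super nodes) has transformation $\mathbf{I}$. For such a partition, $\sigma(i)$ is the index of the part containing $v_i$, and $\mathbf{S}_{hl}$ is the transformation of a directed path from a node of $V_h$ to a node of $V_l$. *)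

theory Defs
  imports "HOL-Analysis.Analysis"
begin

text \<open>A matrix-weighted network on the node type 'n (finite) with block dimension
  CARD('d).  The weight matrix of the ordered pair (i,j) is W i j; the edge set is
  {(i,j). W i j \<noteq> 0}.\<close>


definition mwn_sym :: "('n \<Rightarrow> 'n \<Rightarrow> real^'d::finite^'d) \<Rightarrow> bool" where
  "mwn_sym W \<longleftrightarrow> (\<forall>i j. W i j = transpose (W j i))"

definition wgt :: "('n \<Rightarrow> 'n \<Rightarrow> real^'d::finite^'d) \<Rightarrow> 'n \<Rightarrow> 'n \<Rightarrow> real" where
  "wgt W i j = onorm (\<lambda>x. W i j *v x)"

definition edge_trans :: "('n \<Rightarrow> 'n \<Rightarrow> real^'d::finite^'d) \<Rightarrow> 'n \<Rightarrow> 'n \<Rightarrow> real^'d::finite^'d" where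
  "edge_trans W i j = (1 / wgt W i j) *\<^sub>R W i j"

definition deg :: "('n::finite \<Rightarrow> 'n \<Rightarrow> real^'d::finite^'d) \<Rightarrow> 'n \<Rightarrow> real" where
  "deg W i = (\<Sum>j\<in>UNIV. wgt W i j)"

definition prod_trans :: "('a \<Rightarrow> 'a \<Rightarrow> real^'d^'d) \<Rightarrow> 'a list \<Rightarrow> real^'d::finite^'d" where
  "prod_trans f xs = foldr (\<lambda>p M. f (fst p) (snd p) ** M) (zip xs (tl xs)) (mat 1)"

definition is_dpath :: "('n \<Rightarrow> 'n \<Rightarrow> real^'d::finite^'d) \<Rightarrow> 'n list \<Rightarrow> bool" where
  "is_dpath W xs \<longleftrightarrow> xs \<noteq> [] \<and> distinct xs \<and>
     (\<forall>k. Suc k < length xs \<longrightarrow> W (xs ! k) (xs ! Suc k) \<noteq> 0)"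

definition mwn_connected :: "('n \<Rightarrow> 'n \<Rightarrow> real^'d::finite^'d) \<Rightarrow> bool" where
  "mwn_connected W \<longleftrightarrow> (\<forall>i j. (i, j) \<in> {(a, b). W a b \<noteq> 0}\<^sup>*)"

definition mwn_bipartite :: "('n \<Rightarrow> 'n \<Rightarrow> real^'d::finite^'d) \<Rightarrow> bool" where
  "mwn_bipartite W \<longleftrightarrow> (\<exists>c :: 'n \<Rightarrow> bool. \<forall>i j. W i j \<noteq> 0 \<longrightarrow> c i \<noteq> c j)"

definition coherent :: "('n \<Rightarrow> 'n \<Rightarrow> real^'d::finite^'d) \<Rightarrow> bool" where
  "coherent W \<longleftrightarrow> (\<forall>xs. 2 \<le> length xs \<longrightarrow> distinct xs \<longrightarrow>
      (\<forall>k < length xs. W (xs ! k) (xs ! ((k + 1) mod length xs)) \<noteq> 0) \<longrightarrow>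
      prod_trans (edge_trans W) (xs @ [hd xs]) = mat 1)"

definition part_edge :: "('n \<Rightarrow> 'n \<Rightarrow> real^'d::finite^'d) \<Rightarrow> ('n \<Rightarrow> nat) \<Rightarrow> nat \<Rightarrow> nat \<Rightarrow> bool" where
  "part_edge W \<sigma> a b \<longleftrightarrow> a \<noteq> b \<and> (\<exists>i j. \<sigma> i = a \<and> \<sigma> j = b \<and> W i j \<noteq> 0)"

definition part_trans :: "('n \<Rightarrow> 'n \<Rightarrow> real^'d::finite^'d) \<Rightarrow> ('n \<Rightarrow> nat) \<Rightarrow> nat \<Rightarrow> nat \<Rightarrow> real^'d::finite^'d" where
  "part_trans W \<sigma> a b =
     (let (i, j) = (SOME (i, j). \<sigma> i = a \<and> \<sigma> j = b \<and> W i j \<noteq> 0) in edge_trans W i j)"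

definition coherent_partition :: "('n \<Rightarrow> 'n \<Rightarrow> real^'d::finite^'d) \<Rightarrow> ('n \<Rightarrow> nat) \<Rightarrow> nat \<Rightarrow> bool" where
  "coherent_partition W \<sigma> lp \<longleftrightarrow>
     (\<forall>i. \<sigma> i \<in> {1..lp}) \<and> (\<forall>h\<in>{1..lp}. \<exists>i. \<sigma> i = h) \<and>
     (\<forall>i j. W i j \<noteq> 0 \<longrightarrow> \<sigma> i = \<sigma> j \<longrightarrow> edge_trans W i j = mat 1) \<and>
     (\<forall>i j k l. W i j \<noteq> 0 \<longrightarrow> W k l \<noteq> 0 \<longrightarrow> \<sigma> i = \<sigma> k \<longrightarrow> \<sigma> j = \<sigma> l \<longrightarrow>
        edge_trans W i j = edge_trans W k l) \<and>
     (\<forall>ps. 2 \<le> length ps \<longrightarrow> distinct ps \<longrightarrow> set ps \<subseteq> {1..lp} \<longrightarrow>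
        (\<forall>k < length ps. part_edge W \<sigma> (ps ! k) (ps ! ((k + 1) mod length ps))) \<longrightarrow>
        prod_trans (part_trans W \<sigma>) (ps @ [hd ps]) = mat 1)"

definition part_S :: "('n \<Rightarrow> 'n \<Rightarrow> real^'d::finite^'d) \<Rightarrow> ('n \<Rightarrow> nat) \<Rightarrow> nat \<Rightarrow> nat \<Rightarrow> real^'d::finite^'d" where
  "part_S W \<sigma> h l = (SOME T. \<exists>xs. is_dpath W xs \<and> \<sigma> (hd xs) = h \<and> \<sigma> (last xs) = l \<and>
                              T = prod_trans (edge_trans W) xs)"

end

theory Submission imports Defs "HOL-Library.Transitive_Closure_Table" begin

lemma onorm_transpose_le:
  fixes A :: "real^'m::finite^'n::finite"
  shows "onorm (\<lambda>x. transpose A *v x) \<le> onorm (\<lambda>x. A *v x)"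
proof (rule onorm_le)
  fix x :: "real^'n"
  let ?B = "transpose A"
  have "norm (?B *v x) ^ 2 = inner (x v* A) (?B *v x)"
    by (simp add: power2_norm_eq_inner)
  also have "\<dots> = inner x (A *v (?B *v x))" by (rule dot_lmul_matrix)
  also have "\<dots> \<le> norm x * norm (A *v (?B *v x))" by (rule Cauchy_Schwarz_ineq2[THEN abs_le_D1])
  also have "\<dots> \<le> norm x * (onorm (\<lambda>x. A *v x) * norm (?B *v x))"
    by (rule mult_left_mono[OF onorm[OF matrix_vector_mul_bounded_linear]]) simp
  finally have *: "norm (?B *v x) ^ 2 \<le> onorm (\<lambda>x. A *v x) * norm x * norm (?B *v x)"
    by (simp add: mult_ac)
  show "norm (?B *v x) \<le> onorm (\<lambda>x. A *v x) * norm x"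
  proof (cases "norm (?B *v x) = 0")
    case True then show ?thesis
      using onorm_pos_le[OF matrix_vector_mul_bounded_linear, of A] by simp
  next
    case False
    then have "norm (?B *v x) > 0" by simp
    with * show ?thesis by (simp add: power2_eq_square)
  qed
qed

lemma onorm_transpose:
  fixes A :: "real^'m::finite^'n::finite"
  shows "onorm (\<lambda>x. transpose A *v x) = onorm (\<lambda>x. A *v x)"
  using onorm_transpose_le[of A] onorm_transpose_le[of "transpose A"] by simp

lemma wgt_sym: "mwn_sym W \<Longrightarrow> wgt W i j = wgt W j i"
  unfolding mwn_sym_def wgt_def by (metis onorm_transpose)

lemma wgt_nonneg: "wgt W i j \<ge> 0"
  unfolding wgt_def by (rule onorm_pos_le[OF matrix_vector_mul_bounded_linear])

lemma wgt_pos_iff: "wgt W i j > 0 \<longleftrightarrow> W i j \<noteq> 0"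
  unfolding wgt_def onorm_pos_lt[OF matrix_vector_mul_bounded_linear]
  by (metis matrix_vector_mult_0 matrix_eq)

lemma wgt_zero_iff: "wgt W i j = 0 \<longleftrightarrow> W i j = 0"
  using wgt_pos_iff[of W i j] wgt_nonneg[of W i j] by linarith

lemma W_eq: "W i j = wgt W i j *\<^sub>R edge_trans W i j"
  unfolding edge_trans_def using wgt_zero_iff[of W i j] by (cases "W i j = 0") auto

fun walk :: "('a \<Rightarrow> 'a \<Rightarrow> bool) \<Rightarrow> 'a list \<Rightarrow> bool" where
  "walk E [] = True"
| "walk E [x] = True"
| "walk E (x # y # xs) = (E x y \<and> walk E (y # xs))"

lemma pt_Nil[simp]: "prod_trans f [] = mat 1"
  by (simp add: prod_trans_def)
lemma pt_single[simp]: "prod_trans f [x] = mat 1"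
  by (simp add: prod_trans_def)
lemma pt_Cons2[simp]: "prod_trans f (x # y # xs) = f x y ** prod_trans f (y # xs)"
  by (simp add: prod_trans_def)

lemma pt_append: "prod_trans f (xs @ y # ys) = prod_trans f (xs @ [y]) ** prod_trans f (y # ys)"
proof (induction xs)
  case Nil then show ?case by (simp add: matrix_mul_lid)
next
  case (Cons x xs)
  then show ?case
    by (cases xs) (simp_all add: matrix_mul_rid matrix_mul_assoc)
qed

lemma walk_append: "walk E (xs @ y # ys) \<longleftrightarrow> walk E (xs @ [y]) \<and> walk E (y # ys)"
proof (induction xs)
  case Nil then show ?case by simp
next
  case (Cons x xs)
  then show ?case by (cases xs) auto
qed

lemma walk_nth: "walk E xs \<longleftrightarrow> (\<forall>k. Suc k < length xs \<longrightarrow> E (xs ! k) (xs ! Suc k))"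
proof (induction xs rule: induct_list012)
  case (3 x y xs)
  show ?case
  proof
    assume a: "walk E (x # y # xs)"
    show "\<forall>k. Suc k < length (x # y # xs) \<longrightarrow> E ((x # y # xs) ! k) ((x # y # xs) ! Suc k)"
    proof (intro allI impI)
      fix k assume k: "Suc k < length (x # y # xs)"
      show "E ((x # y # xs) ! k) ((x # y # xs) ! Suc k)"
      proof (cases k)
        case 0 then show ?thesis using a by simp
      next
        case (Suc k') then show ?thesis using a k 3(2) by simp
      qed
    qed
  next
    assume a: "\<forall>k. Suc k < length (x # y # xs) \<longrightarrow> E ((x # y # xs) ! k) ((x # y # xs) ! Suc k)"
    have "E x y" using a[rule_format, of 0] by simp
    moreover have "walk E (y # xs)" unfolding 3(2)
      using a by (metis Suc_less_eq length_Cons nth_Cons_Suc)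
    ultimately show "walk E (x # y # xs)" by simp
  qed
qed simp_all

lemma pt_cong: assumes "\<And>a b. E a b \<Longrightarrow> f a b = g a b"
  shows "walk E xs \<Longrightarrow> prod_trans f xs = prod_trans g xs"
proof (induction xs rule: induct_list012)
  case (3 x y xs)
  then have "E x y" "walk E (y # xs)" by simp_all
  then show ?case using 3(2) assms[of x y] by simp
qed simp_all

lemma walk_mono: assumes "\<And>a b. E a b \<Longrightarrow> E' a b"
  shows "walk E xs \<Longrightarrow> walk E' xs"
proof (induction xs rule: induct_list012)
  case (3 x y xs)
  then have "E x y" "walk E (y # xs)" by simp_all
  then show ?case using 3(2) assms[of x y] by simp
qed simp_all

lemma walk_rev: assumes sym: "\<And>a b. E a b \<Longrightarrow> E b a" shows "walk E xs \<Longrightarrow> walk E (rev xs)"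
proof (induction xs rule: induct_list012)
  case (3 x y xs)
  from 3(3) have "E x y" "walk E (y # xs)" by simp_all
  with 3(2) have "walk E (rev xs @ [y])" by simp
  moreover have "E y x" using sym \<open>E x y\<close> by blast
  ultimately show ?case using walk_append[of E "rev xs" y "[x]"] by simp
qed simp_all

lemma pt_rev:
  assumes "\<And>a b. E a b \<Longrightarrow> transpose (f a b) = f b a"
  shows "walk E xs \<Longrightarrow> prod_trans f (rev xs) = transpose (prod_trans f xs)"
proof (induction xs rule: induct_list012)
  case (3 x y xs)
  then have e: "E x y" "walk E (y # xs)" by simp_all
  have "prod_trans f (rev (x # y # xs)) = prod_trans f (rev xs @ y # [x])" by simp
  also have "\<dots> = prod_trans f (rev (y # xs)) ** f y x"
    by (subst pt_append) (simp add: matrix_mul_rid)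
  also have "\<dots> = transpose (prod_trans f (y # xs)) ** transpose (f x y)"
    using 3(2) e assms[of x y] by simp
  finally show ?case by (simp add: matrix_transpose_mul)
qed simp_all

lemma pt_orth:
  assumes "\<And>a b. E a b \<Longrightarrow> transpose (f a b) ** f a b = mat 1"
  shows "walk E xs \<Longrightarrow> transpose (prod_trans f xs) ** prod_trans f xs = mat 1"
proof (induction xs rule: induct_list012)
  case (3 x y xs)
  then have e: "E x y" "walk E (y # xs)" by simp_all
  let ?P = "prod_trans f (y # xs)"
  have "transpose (prod_trans f (x # y # xs)) ** prod_trans f (x # y # xs)
      = transpose ?P ** (transpose (f x y) ** f x y) ** ?P"
    by (simp add: matrix_transpose_mul matrix_mul_assoc)
  also have "\<dots> = mat 1" using 3(2) e assms[of x y] by (simp add: matrix_mul_rid)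
  finally show ?case .
qed (simp_all add: matrix_mul_lid)

lemma closed_walk:
  assumes loops: "\<And>a. E a a \<Longrightarrow> f a a = mat 1"
    and cyc: "\<And>ps. 2 \<le> length ps \<Longrightarrow> distinct ps \<Longrightarrow> walk E (ps @ [hd ps]) \<Longrightarrow>
                prod_trans f (ps @ [hd ps]) = mat 1"
  shows "walk E xs \<Longrightarrow> xs \<noteq> [] \<Longrightarrow> last xs = hd xs \<Longrightarrow> prod_trans f xs = mat 1"
proof (induction xs rule: length_induct)
  case (1 xs)
  show ?case
  proof (cases "length xs = 1")
    case True
    then obtain a where "xs = [a]" by (metis One_nat_def length_0_conv length_Suc_conv)
    then show ?thesis by simp
  next
    case False
    define ys where "ys = butlast xs"
    have ys_ne: "ys \<noteq> []" using False 1(3) unfolding ys_def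
      by (metis append_butlast_last_id append_Nil length_Cons list.size(3) One_nat_def)
    have xs_eq: "xs = ys @ [hd ys]" unfolding ys_def using 1(3,4) ys_ne
      by (metis append_butlast_last_id hd_append2 ys_def)
    show ?thesis
    proof (cases "distinct ys")
      case True
      show ?thesis
      proof (cases "length ys = 1")
        case True
        then obtain a where "ys = [a]" by (metis One_nat_def length_0_conv length_Suc_conv)
        then have "xs = [a, a]" using xs_eq by simp
        then show ?thesis using 1(2) loops by (simp add: matrix_mul_rid)
      next
        case False
        then have "2 \<le> length ys" using ys_ne by (cases ys) (auto simp: Suc_le_eq)
        then show ?thesis using cyc[of ys] True 1(2) xs_eq by simp
      qed
    next
      case False
      then obtain A x B C where ysd: "ys = A @ [x] @ B @ [x] @ C"
        using not_distinct_decomp by blast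
      define Z where "Z = C @ [hd ys]"
      have xs2: "xs = A @ x # (B @ x # Z)" using xs_eq ysd Z_def by simp
      have w1: "walk E (A @ [x])" and w2: "walk E (x # B @ x # Z)"
        using 1(2) xs2 walk_append by metis+
      have w3: "walk E ((x # B) @ [x])" and w4: "walk E (x # Z)"
        using w2 walk_append[of E "x # B" x Z] by auto
      have p1: "prod_trans f ((x # B) @ [x]) = mat 1"
      proof -
        have "length ((x # B) @ [x]) < length xs" using xs2 Z_def by simp
        moreover have "last ((x # B) @ [x]) = hd ((x # B) @ [x])" by simp
        ultimately show ?thesis using 1(1) w3 by blast
      qed
      have "prod_trans f xs = prod_trans f (A @ [x]) ** prod_trans f (x # B @ x # Z)"
        using xs2 pt_append by metis
      also have "prod_trans f (x # B @ x # Z) = prod_trans f ((x # B) @ [x]) ** prod_trans f (x # Z)"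
        using pt_append[of f "x # B" x Z] by simp
      also have "prod_trans f (A @ [x]) ** (prod_trans f ((x # B) @ [x]) ** prod_trans f (x # Z))
          = prod_trans f (A @ x # Z)"
        using p1 pt_append[of f A x Z] by (simp add: matrix_mul_lid)
      also have "\<dots> = mat 1"
      proof -
        have "walk E (A @ x # Z)" using w1 w4 walk_append by metis
        moreover have "length (A @ x # Z) < length xs" using xs2 by simp
        moreover have "last (A @ x # Z) = hd (A @ x # Z)"
          using 1(4) xs2 Z_def xs_eq by (cases A) auto
        ultimately show ?thesis using 1(1) by blast
      qed
      finally show ?thesis .
    qed
  qed
qed


lemma transpose_zero: "transpose (0::'a::semiring_1^'n^'m) = 0"
  by (simp add: transpose_def vec_eq_iff)

lemma sym_nz: "mwn_sym W \<Longrightarrow> W i j \<noteq> 0 \<Longrightarrow> W j i \<noteq> 0"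
  unfolding mwn_sym_def by (metis transpose_zero)

lemma rtrancl_path_walk: "rtrancl_path r x xs y \<Longrightarrow> walk r (x # xs) \<and> last (x # xs) = y"
proof (induction rule: rtrancl_path.induct)
  case (base x) then show ?case by simp
next
  case (step x y ys z)
  then show ?case by simp
qed

lemma conn_walk:
  assumes "mwn_connected W"
  shows "\<exists>xs. walk (\<lambda>a b. W a b \<noteq> 0) xs \<and> distinct xs \<and> xs \<noteq> [] \<and> hd xs = i \<and> last xs = j"
proof -
  have "(i, j) \<in> {(a, b). W a b \<noteq> 0}\<^sup>*" using assms unfolding mwn_connected_def by blast
  then have "(\<lambda>a b. W a b \<noteq> 0)\<^sup>*\<^sup>* i j" by (simp add: rtranclp_rtrancl_eq)
  then obtain xs where "rtrancl_path (\<lambda>a b. W a b \<noteq> 0) i xs j"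
    using rtranclp_eq_rtrancl_path by metis
  then obtain xs' where p: "rtrancl_path (\<lambda>a b. W a b \<noteq> 0) i xs' j" and d: "distinct (i # xs')"
    using rtrancl_path_distinct by metis
  show ?thesis using rtrancl_path_walk[OF p] d by (intro exI[of _ "i # xs'"]) simp
qed

definition ptr :: "('n \<Rightarrow> 'n \<Rightarrow> real^'d::finite^'d) \<Rightarrow> ('n \<Rightarrow> nat) \<Rightarrow> nat \<Rightarrow> nat \<Rightarrow> real^'d^'d" where
  "ptr W \<sigma> h l = (if h = l then mat 1 else part_trans W \<sigma> h l)"

definition Ep :: "('n \<Rightarrow> 'n \<Rightarrow> real^'d::finite^'d) \<Rightarrow> ('n \<Rightarrow> nat) \<Rightarrow> nat \<Rightarrow> nat \<Rightarrow> bool" where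
  "Ep W \<sigma> h l \<longleftrightarrow> h = l \<or> part_edge W \<sigma> h l"

lemma idx_cyc:
  assumes "k < length ps" "ps \<noteq> []"
  shows "(ps @ [hd ps]) ! Suc k = ps ! ((k + 1) mod length ps)"
proof (cases "Suc k < length ps")
  case True then show ?thesis by (simp add: nth_append)
next
  case False
  then have "Suc k = length ps" using assms by simp
  then show ?thesis using assms by (simp add: nth_append hd_conv_nth)
qed

lemma walk_map:
  assumes "\<And>a b. E a b \<Longrightarrow> E' (g a) (g b)"
  shows "walk E xs \<Longrightarrow> walk E' (map g xs)"
proof (induction xs rule: induct_list012)
  case (3 x y xs)
  then have "E x y" "walk E (y # xs)" by simp_all
  then show ?case using 3(2) assms[of x y] by simp
qed simp_all

definition Gm :: "('n \<Rightarrow> 'n \<Rightarrow> real^'d::finite^'d) \<Rightarrow> ('n \<Rightarrow> nat) \<Rightarrow> nat \<Rightarrow> real^'d^'d" where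
  "Gm W \<sigma> h = prod_trans (ptr W \<sigma>) (SOME p. walk (Ep W \<sigma>) p \<and> p \<noteq> [] \<and> hd p = 1 \<and> last p = h)"

inductive evw and odw for w :: "'n \<Rightarrow> 'n \<Rightarrow> real" and r :: 'n where
  ev_root: "evw w r r"
| ev_od: "evw w r x \<Longrightarrow> w x y \<noteq> 0 \<Longrightarrow> odw w r y"
| od_ev: "odw w r x \<Longrightarrow> w x y \<noteq> 0 \<Longrightarrow> evw w r y"

lemma evod_lim:
  fixes u :: "nat \<Rightarrow> 'n \<Rightarrow> 'v::real_normed_vector"
  assumes wsym: "\<And>a b. w a b = w b a"
    and EF: "\<And>a b. w a b \<noteq> 0 \<Longrightarrow> (\<lambda>t. u t b - u (Suc t) a) \<longlonglongrightarrow> 0"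
  shows "evw w r x \<Longrightarrow> (\<lambda>t. u t x - u t r) \<longlonglongrightarrow> 0"
    and "odw w r x \<Longrightarrow> (\<lambda>t. u t x - u (Suc t) r) \<longlonglongrightarrow> 0 \<and> (\<lambda>t. u (Suc t) x - u t r) \<longlonglongrightarrow> 0"
proof (induction rule: evw_odw.inducts)
  case ev_root
  then show ?case by simp
next
  case (ev_od x y)
  have a: "(\<lambda>t. u t y - u (Suc t) x) \<longlonglongrightarrow> 0" using EF ev_od(3) by blast
  have b: "(\<lambda>t. u (Suc t) x - u (Suc t) r) \<longlonglongrightarrow> 0" using LIMSEQ_Suc[OF ev_od(2)] by simp
  have c: "(\<lambda>t. u t x - u (Suc t) y) \<longlonglongrightarrow> 0" using EF ev_od(3) wsym by metis
  have 1: "(\<lambda>t. u t y - u (Suc t) r) \<longlonglongrightarrow> 0"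
    using tendsto_add_zero[OF a b] by (simp add: algebra_simps)
  have c': "(\<lambda>t. - (u t x - u (Suc t) y)) \<longlonglongrightarrow> 0" using tendsto_minus[OF c] by simp
  have 2: "(\<lambda>t. u (Suc t) y - u t r) \<longlonglongrightarrow> 0"
    using tendsto_add_zero[OF c' ev_od(2)] by (simp add: algebra_simps)
  show ?case using 1 2 by simp
next
  case (od_ev x y)
  have a: "(\<lambda>t. u t y - u (Suc t) x) \<longlonglongrightarrow> 0" using EF od_ev(3) by blast
  have 1: "(\<lambda>t. u t y - u t r) \<longlonglongrightarrow> 0"
    using tendsto_add_zero[OF a conjunct2[OF od_ev(2)]] by (simp add: algebra_simps)
  show ?case using 1 by simp
qed

lemma evod_all:
  assumes conn: "\<And>i j. (i, j) \<in> {(a, b). w a b \<noteq> 0}\<^sup>*"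
  shows "evw w r x \<or> odw w r x"
proof -
  have "(r, x) \<in> {(a, b). w a b \<noteq> 0}\<^sup>*" by (rule conn)
  then show ?thesis
  proof (induction rule: rtrancl_induct)
    case base then show ?case by (simp add: ev_root)
  next
    case (step y z)
    then have "w y z \<noteq> 0" by simp
    with step(3) show ?case using ev_od[of w r y z] od_ev[of w r y z] by blast
  qed
qed

lemma evod_both:
  assumes conn: "\<And>i j. (i, j) \<in> {(a, b). w a b \<noteq> 0}\<^sup>*"
    and nbip: "\<not> (\<exists>c::'n \<Rightarrow> bool. \<forall>i j. w i j \<noteq> 0 \<longrightarrow> c i \<noteq> c j)"
  shows "\<exists>j. evw w r j \<and> odw w r j"
proof -
  have "\<not> (\<forall>i j. w i j \<noteq> 0 \<longrightarrow> evw w r i \<noteq> evw w r j)"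
  proof
    assume "\<forall>i j. w i j \<noteq> 0 \<longrightarrow> evw w r i \<noteq> evw w r j"
    then have "\<exists>c::'n \<Rightarrow> bool. \<forall>i j. w i j \<noteq> 0 \<longrightarrow> c i \<noteq> c j" by blast
    with nbip show False by blast
  qed
  then obtain i j where ij: "w i j \<noteq> 0" "evw w r i = evw w r j" by blast
  show ?thesis
  proof (cases "evw w r i")
    case True
    then have "odw w r j" using ev_od[OF True ij(1)] by simp
    then show ?thesis using ij True by auto
  next
    case False
    then have oi: "odw w r i" using evod_all[OF conn] by blast
    have "evw w r j" using od_ev[OF oi ij(1)] by simp
    then show ?thesis using ij False by auto
  qed
qed

lemma all_close:
  fixes u :: "nat \<Rightarrow> 'n \<Rightarrow> 'v::real_normed_vector" and w :: "'n \<Rightarrow> 'n \<Rightarrow> real"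
  assumes wsym: "\<And>a b. w a b = w b a"
    and EF: "\<And>a b. w a b \<noteq> 0 \<Longrightarrow> (\<lambda>t. u t b - u (Suc t) a) \<longlonglongrightarrow> 0"
    and conn: "\<And>i j. (i, j) \<in> {(a, b). w a b \<noteq> 0}\<^sup>*"
    and nbip: "\<not> (\<exists>c::'n \<Rightarrow> bool. \<forall>i j. w i j \<noteq> 0 \<longrightarrow> c i \<noteq> c j)"
  shows "(\<lambda>t. u t x - u t r) \<longlonglongrightarrow> 0"
proof -
  have L1: "(\<lambda>t. u t x - u t r) \<longlonglongrightarrow> 0" if "evw w r x" for x
    apply (rule evod_lim(1)[where u=u and w=w])
      apply (rule wsym) apply (erule EF) by (rule that)
  have L2: "(\<lambda>t. u t x - u (Suc t) r) \<longlonglongrightarrow> 0 \<and> (\<lambda>t. u (Suc t) x - u t r) \<longlonglongrightarrow> 0" if "odw w r x" for x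
    apply (rule evod_lim(2)[where u=u and w=w])
      apply (rule wsym) apply (erule EF) by (rule that)
  obtain j where j: "evw w r j" "odw w r j" using evod_both[OF conn nbip] by blast
  have s: "(\<lambda>t. u (Suc t) r - u t r) \<longlonglongrightarrow> 0"
    using tendsto_diff[OF L1[OF j(1)] conjunct1[OF L2[OF j(2)]]] by (simp add: algebra_simps)
  show ?thesis
  proof (cases "evw w r x")
    case True then show ?thesis using L1 by blast
  next
    case False
    then have "odw w r x" using evod_all[OF conn] by blast
    from tendsto_add_zero[OF conjunct1[OF L2[OF this]] s]
    show ?thesis by (simp add: algebra_simps)
  qed
qed


lemma norm_diff_sq:
  fixes a b :: "'v::real_inner"
  shows "(norm (a - b))\<^sup>2 = (norm a)\<^sup>2 - 2 * inner a b + (norm b)\<^sup>2"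
  by (simp add: power2_norm_eq_inner inner_diff inner_commute algebra_simps)

lemma rw_conv:
  fixes w :: "'n::finite \<Rightarrow> 'n \<Rightarrow> real" and z :: "nat \<Rightarrow> 'n \<Rightarrow> 'v::real_inner"
  assumes wsym: "\<And>a b. w a b = w b a"
    and wnn: "\<And>a b. w a b \<ge> 0"
    and dpos: "\<And>i. sum (w i) UNIV > 0"
    and rec: "\<And>t j. z (Suc t) j = (\<Sum>i\<in>UNIV. (w j i / sum (w i) UNIV) *\<^sub>R z t i)"
    and conn: "\<And>i j. (i, j) \<in> {(a, b). w a b \<noteq> 0}\<^sup>*"
    and nbip: "\<not> (\<exists>c::'n \<Rightarrow> bool. \<forall>i j. w i j \<noteq> 0 \<longrightarrow> c i \<noteq> c j)"
  shows "(\<lambda>t. z t j) \<longlonglongrightarrow> (sum (w j) UNIV / (\<Sum>k\<in>UNIV. sum (w k) UNIV)) *\<^sub>R (\<Sum>i\<in>UNIV. z 0 i)"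
proof -
  define d where "d i = sum (w i) UNIV" for i
  have dp: "d i > 0" for i using dpos d_def by simp
  define u where "u t i = (1 / d i) *\<^sub>R z t i" for t i
  have zu: "z t i = d i *\<^sub>R u t i" for t i using dp[of i] by (simp add: u_def)
  have dsum: "(\<Sum>j\<in>UNIV. w j i) = d i" for i unfolding d_def by (rule sum.cong[OF refl wsym])
  have urec: "d j *\<^sub>R u (Suc t) j = (\<Sum>i\<in>UNIV. w j i *\<^sub>R u t i)" for t j
  proof -
    have "d j *\<^sub>R u (Suc t) j = z (Suc t) j" by (simp add: zu)
    also have "\<dots> = (\<Sum>i\<in>UNIV. w j i *\<^sub>R u t i)"
      unfolding rec d_def[symmetric] by (intro sum.cong refl) (use dp in \<open>simp add: zu divide_inverse less_imp_neq[symmetric]\<close>)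
    finally show ?thesis .
  qed
  have cons: "(\<Sum>j\<in>UNIV. z t j) = (\<Sum>j\<in>UNIV. z 0 j)" for t
  proof (induction t)
    case (Suc t)
    have "(\<Sum>j\<in>UNIV. z (Suc t) j) = (\<Sum>j\<in>UNIV. \<Sum>i\<in>UNIV. (w j i / d i) *\<^sub>R z t i)"
      unfolding rec d_def ..
    also have "\<dots> = (\<Sum>i\<in>UNIV. \<Sum>j\<in>UNIV. (w j i / d i) *\<^sub>R z t i)" by (rule sum.swap)
    also have "\<dots> = (\<Sum>i\<in>UNIV. ((\<Sum>j\<in>UNIV. w j i) / d i) *\<^sub>R z t i)"
      by (simp add: scaleR_sum_left sum_divide_distrib)
    also have "\<dots> = (\<Sum>i\<in>UNIV. z t i)" using dp by (simp add: dsum less_imp_neq[symmetric])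
    finally show ?case using Suc by simp
  qed simp
  define En where "En t = (\<Sum>i\<in>UNIV. d i * (norm (u t i))\<^sup>2)" for t
  have perj: "(\<Sum>i\<in>UNIV. w j i * (norm (u t i - u (Suc t) j))\<^sup>2)
      = (\<Sum>i\<in>UNIV. w j i * (norm (u t i))\<^sup>2) - d j * (norm (u (Suc t) j))\<^sup>2" for t j
  proof -
    let ?v = "u (Suc t) j"
    have "(\<Sum>i\<in>UNIV. w j i * (norm (u t i - ?v))\<^sup>2)
        = (\<Sum>i\<in>UNIV. w j i * (norm (u t i))\<^sup>2 - 2 * (w j i * inner (u t i) ?v) + w j i * (norm ?v)\<^sup>2)"
      by (intro sum.cong refl) (simp add: norm_diff_sq algebra_simps)
    also have "\<dots> = (\<Sum>i\<in>UNIV. w j i * (norm (u t i))\<^sup>2) - 2 * (\<Sum>i\<in>UNIV. w j i * inner (u t i) ?v)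
        + d j * (norm ?v)\<^sup>2"
      by (simp add: sum.distrib sum_subtractf sum_distrib_left sum_distrib_right d_def)
    also have "(\<Sum>i\<in>UNIV. w j i * inner (u t i) ?v) = inner (d j *\<^sub>R ?v) ?v"
      unfolding urec by (simp add: inner_sum_left)
    also have "\<dots> = d j * (norm ?v)\<^sup>2" by (simp add: power2_norm_eq_inner)
    finally show ?thesis by simp
  qed
  have key: "En t - En (Suc t) = (\<Sum>j\<in>UNIV. \<Sum>i\<in>UNIV. w j i * (norm (u t i - u (Suc t) j))\<^sup>2)" for t
  proof -
    have "(\<Sum>j\<in>UNIV. \<Sum>i\<in>UNIV. w j i * (norm (u t i - u (Suc t) j))\<^sup>2)
       = (\<Sum>j\<in>UNIV. \<Sum>i\<in>UNIV. w j i * (norm (u t i))\<^sup>2) - En (Suc t)"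
      unfolding perj En_def by (simp add: sum_subtractf)
    also have "(\<Sum>j\<in>UNIV. \<Sum>i\<in>UNIV. w j i * (norm (u t i))\<^sup>2) = En t"
      unfolding En_def by (subst sum.swap) (simp add: sum_distrib_right[symmetric] dsum)
    finally show ?thesis by simp
  qed
  have termnn: "0 \<le> w j i * (norm (u t i - u (Suc t) j))\<^sup>2" for t i j using wnn by simp
  have Enn: "0 \<le> En t" for t unfolding En_def using dp by (intro sum_nonneg) (simp add: less_imp_le)
  have dec: "decseq En"
    unfolding decseq_Suc_iff
  proof
    fix t
    have "0 \<le> (\<Sum>j\<in>UNIV. \<Sum>i\<in>UNIV. w j i * (norm (u t i - u (Suc t) j))\<^sup>2)"
      by (intro sum_nonneg termnn)
    then show "En (Suc t) \<le> En t" using key[of t] by simp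
  qed
  obtain L where L: "En \<longlonglongrightarrow> L" using decseq_convergent[OF dec, of 0] Enn by blast
  have diff0: "(\<lambda>t. En t - En (Suc t)) \<longlonglongrightarrow> 0"
    using tendsto_diff[OF L LIMSEQ_Suc[OF L]] by simp
  have EF: "(\<lambda>t. u t b - u (Suc t) a) \<longlonglongrightarrow> 0" if ab: "w a b \<noteq> 0" for a b
  proof -
    have le: "w a b * (norm (u t b - u (Suc t) a))\<^sup>2 \<le> En t - En (Suc t)" for t
    proof -
      have "w a b * (norm (u t b - u (Suc t) a))\<^sup>2 \<le> (\<Sum>i\<in>UNIV. w a i * (norm (u t i - u (Suc t) a))\<^sup>2)"
        by (rule member_le_sum) (use termnn in auto)
      also have "\<dots> \<le> (\<Sum>j\<in>UNIV. \<Sum>i\<in>UNIV. w j i * (norm (u t i - u (Suc t) j))\<^sup>2)"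
        by (rule member_le_sum[where f="\<lambda>j. \<Sum>i\<in>UNIV. w j i * (norm (u t i - u (Suc t) j))\<^sup>2"])
           (use termnn in \<open>auto intro: sum_nonneg\<close>)
      finally show ?thesis using key by simp
    qed
    have t1: "(\<lambda>t. w a b * (norm (u t b - u (Suc t) a))\<^sup>2) \<longlonglongrightarrow> 0"
      by (rule tendsto_sandwich[OF _ _ tendsto_const diff0]) (use le termnn in auto)
    have wp: "w a b > 0" using wnn[of a b] ab by simp
    have "(\<lambda>t. (1 / w a b) * (w a b * (norm (u t b - u (Suc t) a))\<^sup>2)) \<longlonglongrightarrow> 0"
      by (rule tendsto_mult_right_zero[OF t1])
    then have "(\<lambda>t. (norm (u t b - u (Suc t) a))\<^sup>2) \<longlonglongrightarrow> 0" using wp by simp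
    from tendsto_real_sqrt[OF this] have "(\<lambda>t. norm (u t b - u (Suc t) a)) \<longlonglongrightarrow> 0" by simp
    then show ?thesis by (simp add: tendsto_norm_zero_iff)
  qed
  have close: "(\<lambda>t. u t x - u t j) \<longlonglongrightarrow> 0" for x
    by (rule all_close[where w=w, OF wsym EF conn nbip])
  define M where "M = (\<Sum>i\<in>UNIV. z 0 i)"
  define S where "S = (\<Sum>k\<in>UNIV. d k)"
  have Sp: "S > 0" unfolding S_def using dp by (simp add: sum_pos)
  have "(\<lambda>t. \<Sum>x\<in>UNIV. d x *\<^sub>R (u t j - u t x)) \<longlonglongrightarrow> (\<Sum>x\<in>UNIV. d x *\<^sub>R 0)"
  proof (rule tendsto_sum)
    fix x
    have "(\<lambda>t. d x *\<^sub>R (- (u t x - u t j))) \<longlonglongrightarrow> d x *\<^sub>R (- 0)"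
      by (intro tendsto_intros close)
    then show "(\<lambda>t. d x *\<^sub>R (u t j - u t x)) \<longlonglongrightarrow> d x *\<^sub>R 0" by simp
  qed
  moreover have "(\<Sum>x\<in>UNIV. d x *\<^sub>R (u t j - u t x)) = S *\<^sub>R u t j - M" for t
  proof -
    have "(\<Sum>x\<in>UNIV. d x *\<^sub>R (u t j - u t x)) = S *\<^sub>R u t j - (\<Sum>x\<in>UNIV. z t x)"
      by (simp add: scaleR_diff_right sum_subtractf S_def scaleR_sum_left zu)
    then show ?thesis using cons M_def by simp
  qed
  ultimately have "(\<lambda>t. S *\<^sub>R u t j - M) \<longlonglongrightarrow> 0" by simp
  then have "(\<lambda>t. (1 / S) *\<^sub>R (S *\<^sub>R u t j - M) + (1 / S) *\<^sub>R M) \<longlonglongrightarrow> (1 / S) *\<^sub>R 0 + (1 / S) *\<^sub>R M"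
    by (intro tendsto_intros)
  then have "(\<lambda>t. u t j) \<longlonglongrightarrow> (1 / S) *\<^sub>R M" using Sp by (simp add: scaleR_diff_right)
  then have "(\<lambda>t. d j *\<^sub>R u t j) \<longlonglongrightarrow> d j *\<^sub>R ((1 / S) *\<^sub>R M)"
    by (intro tendsto_intros)
  then show ?thesis unfolding M_def S_def d_def[symmetric] by (simp add: zu[symmetric] divide_inverse_commute mult.commute)
qed


context
  fixes W :: "'n::finite \<Rightarrow> 'n \<Rightarrow> real^'d::finite^'d" and \<sigma> :: "'n \<Rightarrow> nat" and lp :: nat
  assumes sym: "mwn_sym W" and cp: "coherent_partition W \<sigma> lp" and conn: "mwn_connected W"
begin

lemma cp1: "\<sigma> i \<in> {1..lp}" using cp unfolding coherent_partition_def by blast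
lemma cp2: "h \<in> {1..lp} \<Longrightarrow> \<exists>i. \<sigma> i = h" using cp unfolding coherent_partition_def by blast
lemma cp3: "W i j \<noteq> 0 \<Longrightarrow> \<sigma> i = \<sigma> j \<Longrightarrow> edge_trans W i j = mat 1"
  using cp unfolding coherent_partition_def by blast
lemma cp4: "W i j \<noteq> 0 \<Longrightarrow> W k l \<noteq> 0 \<Longrightarrow> \<sigma> i = \<sigma> k \<Longrightarrow> \<sigma> j = \<sigma> l \<Longrightarrow>
        edge_trans W i j = edge_trans W k l"
proof -
  note c = cp[unfolded coherent_partition_def]
  have "\<forall>i j k l. W i j \<noteq> 0 \<longrightarrow> W k l \<noteq> 0 \<longrightarrow> \<sigma> i = \<sigma> k \<longrightarrow> \<sigma> j = \<sigma> l \<longrightarrow>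
        edge_trans W i j = edge_trans W k l" using conjunct1[OF conjunct2[OF conjunct2[OF conjunct2[OF c]]]] .
  then show "W i j \<noteq> 0 \<Longrightarrow> W k l \<noteq> 0 \<Longrightarrow> \<sigma> i = \<sigma> k \<Longrightarrow> \<sigma> j = \<sigma> l \<Longrightarrow>
        edge_trans W i j = edge_trans W k l" by blast
qed
lemma cp5: "2 \<le> length ps \<Longrightarrow> distinct ps \<Longrightarrow> set ps \<subseteq> {1..lp} \<Longrightarrow>
        (\<forall>k < length ps. part_edge W \<sigma> (ps ! k) (ps ! ((k + 1) mod length ps))) \<Longrightarrow>
        prod_trans (part_trans W \<sigma>) (ps @ [hd ps]) = mat 1"
proof -
  note c = cp[unfolded coherent_partition_def]
  have "\<forall>ps. 2 \<le> length ps \<longrightarrow> distinct ps \<longrightarrow> set ps \<subseteq> {1..lp} \<longrightarrow>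
        (\<forall>k < length ps. part_edge W \<sigma> (ps ! k) (ps ! ((k + 1) mod length ps))) \<longrightarrow>
        prod_trans (part_trans W \<sigma>) (ps @ [hd ps]) = mat 1"
    using conjunct2[OF conjunct2[OF conjunct2[OF conjunct2[OF c]]]] .
  then show "2 \<le> length ps \<Longrightarrow> distinct ps \<Longrightarrow> set ps \<subseteq> {1..lp} \<Longrightarrow>
        (\<forall>k < length ps. part_edge W \<sigma> (ps ! k) (ps ! ((k + 1) mod length ps))) \<Longrightarrow>
        prod_trans (part_trans W \<sigma>) (ps @ [hd ps]) = mat 1" by blast
qed

lemma P1: assumes "W i j \<noteq> 0" shows "edge_trans W i j = ptr W \<sigma> (\<sigma> i) (\<sigma> j)"
proof (cases "\<sigma> i = \<sigma> j")
  case True then show ?thesis using cp3[OF assms] by (simp add: ptr_def)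
next
  case False
  define P where "P = (\<lambda>(a, b). \<sigma> a = \<sigma> i \<and> \<sigma> b = \<sigma> j \<and> W a b \<noteq> 0)"
  have ex: "\<exists>p. P p" using assms unfolding P_def by auto
  obtain a b where ab: "(SOME p. P p) = (a, b)" by (cases "SOME p. P p") auto
  have "P (a, b)" using someI_ex[OF ex] ab by simp
  then have h: "\<sigma> a = \<sigma> i" "\<sigma> b = \<sigma> j" "W a b \<noteq> 0" unfolding P_def by auto
  have "part_trans W \<sigma> (\<sigma> i) (\<sigma> j) = edge_trans W a b"
    unfolding part_trans_def P_def[symmetric] using ab by simp
  also have "\<dots> = edge_trans W i j" using cp4[OF h(3) assms] h by simp
  finally show ?thesis using False by (simp add: ptr_def)
qed

lemma pe_sym: "part_edge W \<sigma> a b \<Longrightarrow> part_edge W \<sigma> b a"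
  unfolding part_edge_def using sym_nz[OF sym] by blast

lemma Ep_sym: "Ep W \<sigma> a b \<Longrightarrow> Ep W \<sigma> b a"
  unfolding Ep_def using pe_sym by blast

lemma P4: assumes "Ep W \<sigma> a b" shows "transpose (ptr W \<sigma> a b) = ptr W \<sigma> b a"
proof (cases "a = b")
  case True then show ?thesis by (simp add: ptr_def)
next
  case False
  then have "part_edge W \<sigma> a b" using assms Ep_def by blast
  then obtain i j where ij: "\<sigma> i = a" "\<sigma> j = b" "W i j \<noteq> 0" unfolding part_edge_def by blast
  have ji: "W j i \<noteq> 0" using sym_nz[OF sym ij(3)] .
  have "transpose (ptr W \<sigma> a b) = transpose (edge_trans W i j)" using P1[OF ij(3)] ij by simp
  also have "\<dots> = (1 / wgt W i j) *\<^sub>R transpose (W i j)" by (simp add: edge_trans_def transpose_scalar)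
  also have "\<dots> = edge_trans W j i"
  proof -
    have "W j i = transpose (W i j)" using sym unfolding mwn_sym_def by blast
    then show ?thesis unfolding edge_trans_def by (simp add: wgt_sym[OF sym, of i j])
  qed
  also have "\<dots> = ptr W \<sigma> b a" using P1[OF ji] ij by simp
  finally show ?thesis .
qed

lemma P5: assumes "Ep W \<sigma> a b" shows "ptr W \<sigma> a b ** ptr W \<sigma> b a = mat 1"
proof (cases "a = b")
  case True then show ?thesis by (simp add: ptr_def matrix_mul_lid)
next
  case False
  then have pe: "part_edge W \<sigma> a b" using assms Ep_def by blast
  have pe': "part_edge W \<sigma> b a" using pe_sym[OF pe] .
  have ra: "a \<in> {1..lp}" "b \<in> {1..lp}" using pe cp1 unfolding part_edge_def by auto
  have "prod_trans (part_trans W \<sigma>) ([a, b] @ [hd [a, b]]) = mat 1"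
  proof (rule cp5)
    show "\<forall>k<length [a, b]. part_edge W \<sigma> ([a, b] ! k) ([a, b] ! ((k + 1) mod length [a, b]))"
      using pe pe' by (auto simp: less_Suc_eq)
  qed (use False ra in auto)
  then show ?thesis using False by (simp add: ptr_def matrix_mul_rid)
qed

lemma P5': "Ep W \<sigma> a b \<Longrightarrow> transpose (ptr W \<sigma> a b) ** ptr W \<sigma> a b = mat 1"
proof -
  assume e: "Ep W \<sigma> a b"
  have "transpose (ptr W \<sigma> a b) = ptr W \<sigma> b a" by (rule P4[OF e])
  then show ?thesis using P5[OF Ep_sym[OF e]] by simp
qed

lemma P6: "walk (Ep W \<sigma>) xs \<Longrightarrow> xs \<noteq> [] \<Longrightarrow> last xs = hd xs \<Longrightarrow> prod_trans (ptr W \<sigma>) xs = mat 1"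
proof (rule closed_walk)
  fix a show "ptr W \<sigma> a a = mat 1" by (simp add: ptr_def)
next
  fix ps :: "nat list"
  assume len: "2 \<le> length ps" and dist: "distinct ps" and wk: "walk (Ep W \<sigma>) (ps @ [hd ps])"
  have ne: "ps \<noteq> []" using len by auto
  have neq: "ps ! k \<noteq> ps ! ((k + 1) mod length ps)" if "k < length ps" for k
  proof -
    have "(k + 1) mod length ps < length ps" using ne by simp
    moreover have "k \<noteq> (k + 1) mod length ps"
    proof (cases "Suc k < length ps")
      case True then show ?thesis by simp
    next
      case False then have "Suc k = length ps" using that by simp
      then show ?thesis using len by auto
    qed
    ultimately show ?thesis using dist that nth_eq_iff_index_eq by blast
  qed
  have pe: "part_edge W \<sigma> (ps ! k) (ps ! ((k + 1) mod length ps))" if "k < length ps" for k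
  proof -
    have "Ep W \<sigma> ((ps @ [hd ps]) ! k) ((ps @ [hd ps]) ! Suc k)"
      using wk[unfolded walk_nth] that by simp
    then have "Ep W \<sigma> (ps ! k) (ps ! ((k + 1) mod length ps))"
      using idx_cyc[OF that ne] that by (simp add: nth_append)
    then show ?thesis using neq[OF that] Ep_def by blast
  qed
  have wk2: "walk (part_edge W \<sigma>) (ps @ [hd ps])"
    unfolding walk_nth
  proof (intro allI impI)
    fix k assume "Suc k < length (ps @ [hd ps])"
    then have k: "k < length ps" by simp
    show "part_edge W \<sigma> ((ps @ [hd ps]) ! k) ((ps @ [hd ps]) ! Suc k)"
      using pe[OF k] idx_cyc[OF k ne] k by (simp add: nth_append)
  qed
  have setps: "set ps \<subseteq> {1..lp}"
  proof
    fix x assume "x \<in> set ps"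
    then obtain k where k: "k < length ps" "x = ps ! k" by (metis in_set_conv_nth)
    then show "x \<in> {1..lp}" using pe[OF k(1)] cp1 unfolding part_edge_def by metis
  qed
  have "prod_trans (ptr W \<sigma>) (ps @ [hd ps]) = prod_trans (part_trans W \<sigma>) (ps @ [hd ps])"
    by (rule pt_cong[OF _ wk2]) (simp add: ptr_def part_edge_def)
  also have "\<dots> = mat 1" using cp5[OF len dist setps] pe by blast
  finally show "prod_trans (ptr W \<sigma>) (ps @ [hd ps]) = mat 1" .
qed


lemma Wedge_Ep: "W a b \<noteq> 0 \<Longrightarrow> Ep W \<sigma> (\<sigma> a) (\<sigma> b)"
  unfolding Ep_def part_edge_def by blast

lemma node_part:
  "walk (\<lambda>a b. W a b \<noteq> 0) xs \<Longrightarrow>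
     prod_trans (edge_trans W) xs = prod_trans (ptr W \<sigma>) (map \<sigma> xs) \<and> walk (Ep W \<sigma>) (map \<sigma> xs)"
proof (induction xs rule: induct_list012)
  case (3 x y xs)
  then have e: "W x y \<noteq> 0" "walk (\<lambda>a b. W a b \<noteq> 0) (y # xs)" by simp_all
  with 3(2) have ih: "prod_trans (edge_trans W) (y # xs) = prod_trans (ptr W \<sigma>) (map \<sigma> (y # xs))"
      "walk (Ep W \<sigma>) (map \<sigma> (y # xs))" by blast+
  show ?case using ih P1[OF e(1)] Wedge_Ep[OF e(1)] by simp
qed simp_all

lemma P7:
  assumes w1: "walk (Ep W \<sigma>) p1" and w2: "walk (Ep W \<sigma>) p2" and n1: "p1 \<noteq> []" and n2: "p2 \<noteq> []"
    and h: "hd p1 = hd p2" and l: "last p1 = last p2"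
  shows "prod_trans (ptr W \<sigma>) p1 = prod_trans (ptr W \<sigma>) p2"
proof -
  define b where "b = last p1"
  obtain p1' where p1: "p1 = p1' @ [b]" using n1 b_def by (metis append_butlast_last_id)
  obtain r2 where r2: "rev p2 = b # r2" using n2 l b_def
    by (metis hd_rev list.collapse rev_is_Nil_conv)
  have wr: "walk (Ep W \<sigma>) (rev p2)" by (rule walk_rev[OF Ep_sym w2])
  have wc: "walk (Ep W \<sigma>) (p1' @ b # r2)"
    using w1 wr p1 r2 walk_append by metis
  have lc: "last (p1' @ b # r2) = hd (p1' @ b # r2)"
  proof -
    have "last (p1' @ b # r2) = last (rev p2)" using r2 by simp
    also have "\<dots> = hd p2" using n2 by (simp add: last_rev)
    also have "\<dots> = hd p1" using h by simp
    also have "\<dots> = hd (p1' @ b # r2)" using p1 by (cases p1') auto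
    finally show ?thesis .
  qed
  have "prod_trans (ptr W \<sigma>) (p1' @ b # r2) = mat 1"
    by (rule P6[OF wc _ lc]) simp
  moreover have "prod_trans (ptr W \<sigma>) (p1' @ b # r2) = prod_trans (ptr W \<sigma>) p1 ** prod_trans (ptr W \<sigma>) (rev p2)"
    using pt_append p1 r2 by metis
  moreover have "prod_trans (ptr W \<sigma>) (rev p2) = transpose (prod_trans (ptr W \<sigma>) p2)"
    by (rule pt_rev[OF P4 w2])
  ultimately have A: "prod_trans (ptr W \<sigma>) p1 ** transpose (prod_trans (ptr W \<sigma>) p2) = mat 1" by simp
  have B: "transpose (prod_trans (ptr W \<sigma>) p2) ** prod_trans (ptr W \<sigma>) p2 = mat 1"
    by (rule pt_orth[OF P5' w2])
  have "prod_trans (ptr W \<sigma>) p1 = prod_trans (ptr W \<sigma>) p1 ** (transpose (prod_trans (ptr W \<sigma>) p2) ** prod_trans (ptr W \<sigma>) p2)"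
    using B by (simp add: matrix_mul_rid)
  also have "\<dots> = prod_trans (ptr W \<sigma>) p2" by (metis A matrix_mul_assoc matrix_mul_lid)
  finally show ?thesis .
qed

lemma one_part: "\<exists>a. \<sigma> a = 1"
proof -
  obtain x :: 'n where True by blast
  have "1 \<in> {1..lp}" using cp1[of x] by simp
  then show ?thesis using cp2 by blast
qed

lemma ex1: "\<exists>q. walk (Ep W \<sigma>) q \<and> q \<noteq> [] \<and> hd q = 1 \<and> last q = \<sigma> i"
proof -
  obtain a where a: "\<sigma> a = 1" using one_part by blast
  obtain xs where xs: "walk (\<lambda>a b. W a b \<noteq> 0) xs" "xs \<noteq> []" "hd xs = a" "last xs = i"
    using conn_walk[OF conn] by blast
  show ?thesis
    using node_part[OF xs(1)] xs a by (intro exI[of _ "map \<sigma> xs"]) (simp add: hd_map last_map)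
qed

lemma Gsome: "walk (Ep W \<sigma>) q \<and> q \<noteq> [] \<and> hd q = 1 \<and> last q = h \<Longrightarrow>
  (let p = (SOME p. walk (Ep W \<sigma>) p \<and> p \<noteq> [] \<and> hd p = 1 \<and> last p = h) in
    walk (Ep W \<sigma>) p \<and> p \<noteq> [] \<and> hd p = 1 \<and> last p = h)"
  unfolding Let_def by (rule someI)

lemma K:
  assumes wp: "walk (Ep W \<sigma>) p" and np: "p \<noteq> []" and hp: "hd p = \<sigma> i"
  shows "Gm W \<sigma> (\<sigma> i) ** prod_trans (ptr W \<sigma>) p = Gm W \<sigma> (last p)"
proof -
  define q where "q = (SOME p. walk (Ep W \<sigma>) p \<and> p \<noteq> [] \<and> hd p = 1 \<and> last p = \<sigma> i)"
  have q: "walk (Ep W \<sigma>) q" "q \<noteq> []" "hd q = 1" "last q = \<sigma> i"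
    using ex1[of i] Gsome[of _ "\<sigma> i"] unfolding q_def Let_def by blast+
  obtain q' where q': "q = q' @ [\<sigma> i]" using q(2,4) by (metis append_butlast_last_id)
  obtain p' where p': "p = \<sigma> i # p'" using np hp by (metis list.collapse)
  define c where "c = q' @ \<sigma> i # p'"
  have wc: "walk (Ep W \<sigma>) c" unfolding c_def using q(1) wp q' p' walk_append by metis
  have nc: "c \<noteq> []" "hd c = 1" "last c = last p"
    unfolding c_def using q(3) q' p' by (auto simp: hd_append)
  have pc: "prod_trans (ptr W \<sigma>) c = Gm W \<sigma> (\<sigma> i) ** prod_trans (ptr W \<sigma>) p"
    unfolding c_def Gm_def q_def[symmetric] using pt_append q' p' by metis
  define r where "r = (SOME p. walk (Ep W \<sigma>) p \<and> p \<noteq> [] \<and> hd p = 1 \<and> last p = last c)"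
  have r: "walk (Ep W \<sigma>) r" "r \<noteq> []" "hd r = 1" "last r = last c"
    using Gsome[of c "last c"] wc nc unfolding r_def Let_def by blast+
  have "prod_trans (ptr W \<sigma>) c = prod_trans (ptr W \<sigma>) r"
    by (rule P7[OF wc r(1) nc(1) r(2)]) (use nc r in auto)
  also have "\<dots> = Gm W \<sigma> (last p)" unfolding r_def Gm_def nc(3) ..
  finally show ?thesis using pc by simp
qed

lemma G_orth: "transpose (Gm W \<sigma> (\<sigma> i)) ** Gm W \<sigma> (\<sigma> i) = mat 1"
proof -
  define q where "q = (SOME p. walk (Ep W \<sigma>) p \<and> p \<noteq> [] \<and> hd p = 1 \<and> last p = \<sigma> i)"
  have q: "walk (Ep W \<sigma>) q"
    using ex1[of i] Gsome[of _ "\<sigma> i"] unfolding q_def Let_def by blast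
  show ?thesis unfolding Gm_def q_def[symmetric] by (rule pt_orth[OF P5' q])
qed

lemma G_orth': "Gm W \<sigma> (\<sigma> i) ** transpose (Gm W \<sigma> (\<sigma> i)) = mat 1"
  by (rule iffD1[OF matrix_left_right_inverse G_orth])

lemma G_edge: assumes "W j i \<noteq> 0" shows "Gm W \<sigma> (\<sigma> j) ** edge_trans W j i = Gm W \<sigma> (\<sigma> i)"
proof -
  have "Gm W \<sigma> (\<sigma> j) ** prod_trans (ptr W \<sigma>) [\<sigma> j, \<sigma> i] = Gm W \<sigma> (last [\<sigma> j, \<sigma> i])"
    by (rule K) (use Wedge_Ep[OF assms] in simp_all)
  then show ?thesis using P1[OF assms] by (simp add: matrix_mul_rid)
qed

lemma S_eq: "part_S W \<sigma> (\<sigma> a) (\<sigma> b) = transpose (Gm W \<sigma> (\<sigma> a)) ** Gm W \<sigma> (\<sigma> b)"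
proof -
  define Q where "Q = (\<lambda>T. \<exists>xs. is_dpath W xs \<and> \<sigma> (hd xs) = \<sigma> a \<and> \<sigma> (last xs) = \<sigma> b \<and>
                              T = prod_trans (edge_trans W) xs)"
  obtain xs where xs: "walk (\<lambda>a b. W a b \<noteq> 0) xs" "distinct xs" "xs \<noteq> []" "hd xs = a" "last xs = b"
    using conn_walk[OF conn] by blast
  have "\<forall>k. Suc k < length xs \<longrightarrow> W (xs ! k) (xs ! Suc k) \<noteq> 0" using xs(1) unfolding walk_nth .
  then have "is_dpath W xs" unfolding is_dpath_def using xs(2,3) by blast
  then have "Q (prod_trans (edge_trans W) xs)" unfolding Q_def using xs by blast
  then have "Q (SOME T. Q T)" by (rule someI)
  then obtain ys where ys: "is_dpath W ys" "\<sigma> (hd ys) = \<sigma> a" "\<sigma> (last ys) = \<sigma> b"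
      and T: "(SOME T. Q T) = prod_trans (edge_trans W) ys" unfolding Q_def by blast
  have wy: "walk (\<lambda>a b. W a b \<noteq> 0) ys" unfolding walk_nth using ys(1) unfolding is_dpath_def by blast
  have ny: "ys \<noteq> []" using ys(1) unfolding is_dpath_def by blast
  note np = node_part[OF wy]
  have "Gm W \<sigma> (\<sigma> a) ** prod_trans (ptr W \<sigma>) (map \<sigma> ys) = Gm W \<sigma> (last (map \<sigma> ys))"
    by (rule K) (use np ny ys in \<open>simp_all add: hd_map\<close>)
  then have e: "Gm W \<sigma> (\<sigma> a) ** prod_trans (edge_trans W) ys = Gm W \<sigma> (\<sigma> b)"
    using np ny ys by (simp add: last_map)
  have "part_S W \<sigma> (\<sigma> a) (\<sigma> b) = prod_trans (edge_trans W) ys"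
    unfolding part_S_def Q_def[symmetric] T ..
  also have "\<dots> = (transpose (Gm W \<sigma> (\<sigma> a)) ** Gm W \<sigma> (\<sigma> a)) ** prod_trans (edge_trans W) ys"
    by (simp add: G_orth matrix_mul_lid)
  also have "\<dots> = transpose (Gm W \<sigma> (\<sigma> a)) ** Gm W \<sigma> (\<sigma> b)"
    using e by (metis matrix_mul_assoc)
  finally show ?thesis .
qed


lemma deg_pos:
  assumes nb: "\<not> mwn_bipartite W"
  shows "deg W i > 0"
proof -
  have "\<exists>j. W i j \<noteq> 0"
  proof (rule ccontr)
    assume "\<not> (\<exists>j. W i j \<noteq> 0)"
    then have z: "\<And>j. W i j = 0" by blast
    have all: "x = i" for x
    proof -
      have "(i, x) \<in> {(a, b). W a b \<noteq> 0}\<^sup>*" using conn unfolding mwn_connected_def by blast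
      then show ?thesis
      proof (cases rule: converse_rtranclE)
        case (step y) then show ?thesis using z by simp
      qed simp
    qed
    have noe: "W a b = 0" for a b
    proof -
      have "a = i" by (rule all)
      then show ?thesis using z[of b] by simp
    qed
    have "mwn_bipartite W" unfolding mwn_bipartite_def by (simp add: noe)
    with nb show False by blast
  qed
  then obtain j where j: "W i j \<noteq> 0" by blast
  have "wgt W i j > 0" using j by (simp add: wgt_pos_iff)
  moreover have "wgt W i j \<le> (\<Sum>k\<in>UNIV. wgt W i k)"
    by (rule member_le_sum[where f="\<lambda>k. wgt W i k"]) (simp_all only: wgt_nonneg UNIV_I finite)
  ultimately show ?thesis unfolding deg_def by linarith
qed

lemma main:
  fixes y :: "nat \<Rightarrow> 'n \<Rightarrow> real^'d"
  assumes nb: "\<not> mwn_bipartite W"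
    and rec: "\<forall>t j. y (Suc t) j = (\<Sum>i\<in>UNIV. (1 / deg W i) *\<^sub>R (transpose (W i j) *v y t i))"
  shows "\<forall>j. (\<lambda>t. y t j) \<longlonglongrightarrow>
           (deg W j / (\<Sum>k\<in>UNIV. deg W k)) *\<^sub>R
             ((\<Sum>i\<in>UNIV. y 0 i v* part_S W \<sigma> (\<sigma> i) 1) v* part_S W \<sigma> 1 (\<sigma> j))"
proof
  fix j
  define G where "G i = Gm W \<sigma> (\<sigma> i)" for i
  define z where "z t i = G i *v y t i" for t i
  obtain a1 where a1: "\<sigma> a1 = 1" using one_part by blast
  have degeq: "sum (wgt W i) UNIV = deg W i" for i unfolding deg_def ..
  have zrec: "z (Suc t) j = (\<Sum>i\<in>UNIV. (wgt W j i / sum (wgt W i) UNIV) *\<^sub>R z t i)" for t j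
  proof -
    have "z (Suc t) j = G j *v (\<Sum>i\<in>UNIV. (1 / deg W i) *\<^sub>R (transpose (W i j) *v y t i))"
      unfolding z_def using rec by simp
    also have "\<dots> = (\<Sum>i\<in>UNIV. G j *v ((1 / deg W i) *\<^sub>R (transpose (W i j) *v y t i)))"
      by (rule linear_sum[OF matrix_vector_mul_linear])
    also have "\<dots> = (\<Sum>i\<in>UNIV. (wgt W j i / sum (wgt W i) UNIV) *\<^sub>R z t i)"
    proof (rule sum.cong[OF refl])
      fix i
      have "W j i = transpose (W i j)" using sym unfolding mwn_sym_def by blast
      then have Wji: "transpose (W i j) = W j i" by simp
      have "G j *v (W j i *v y t i) = wgt W j i *\<^sub>R z t i"
      proof (cases "W j i = 0")
        case True
        then show ?thesis using wgt_zero_iff[of W j i] by simp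
      next
        case False
        have "G j *v (W j i *v y t i) = G j *v ((wgt W j i *\<^sub>R edge_trans W j i) *v y t i)"
          using W_eq[of W j i] by simp
        also have "\<dots> = wgt W j i *\<^sub>R ((G j ** edge_trans W j i) *v y t i)"
          by (simp add: scaleR_matrix_vector_assoc[symmetric] matrix_vector_mult_scaleR matrix_vector_mul_assoc)
        also have "\<dots> = wgt W j i *\<^sub>R z t i"
          unfolding G_def z_def G_edge[OF False] ..
        finally show ?thesis .
      qed
      then show "G j *v ((1 / deg W i) *\<^sub>R (transpose (W i j) *v y t i))
          = (wgt W j i / sum (wgt W i) UNIV) *\<^sub>R z t i"
        unfolding Wji degeq by (simp add: matrix_vector_mult_scaleR divide_inverse_commute)
    qed
    finally show ?thesis .
  qed
  have Rset: "{(a, b). wgt W a b \<noteq> 0} = {(a, b). W a b \<noteq> 0}" by (simp add: wgt_zero_iff)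
  have conn': "(i, k) \<in> {(a, b). wgt W a b \<noteq> 0}\<^sup>*" for i k
    using conn unfolding Rset mwn_connected_def by blast
  have nb': "\<not> (\<exists>c::'n \<Rightarrow> bool. \<forall>i k. wgt W i k \<noteq> 0 \<longrightarrow> c i \<noteq> c k)"
    using nb unfolding mwn_bipartite_def wgt_zero_iff .
  have lim: "(\<lambda>t. z t j) \<longlonglongrightarrow> (sum (wgt W j) UNIV / (\<Sum>k\<in>UNIV. sum (wgt W k) UNIV)) *\<^sub>R (\<Sum>i\<in>UNIV. z 0 i)"
  proof -
    have ws: "\<And>a b. wgt W a b = wgt W b a" by (rule wgt_sym[OF sym])
    have wn: "\<And>a b. wgt W a b \<ge> 0" by (rule wgt_nonneg)
    have dp: "\<And>i. sum (wgt W i) UNIV > 0" unfolding degeq by (rule deg_pos[OF nb])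
    show ?thesis by (rule rw_conv[where w="wgt W" and z=z, OF ws wn dp zrec conn' nb'])
  qed
  define c where "c = deg W j / (\<Sum>k\<in>UNIV. deg W k)"
  define V where "V = (\<Sum>i\<in>UNIV. G i *v y 0 i)"
  have lim2: "(\<lambda>t. z t j) \<longlonglongrightarrow> c *\<^sub>R V" using lim unfolding degeq c_def V_def z_def .
  have "(\<lambda>t. transpose (G j) *v z t j) \<longlonglongrightarrow> transpose (G j) *v (c *\<^sub>R V)"
    by (rule bounded_linear.tendsto[OF matrix_vector_mul_bounded_linear lim2])
  moreover have "transpose (G j) *v z t j = y t j" for t
    unfolding z_def G_def matrix_vector_mul_assoc G_orth by (rule matrix_vector_mul_lid)
  moreover have "transpose (G j) *v (c *\<^sub>R V) = c *\<^sub>R ((\<Sum>i\<in>UNIV. y 0 i v* part_S W \<sigma> (\<sigma> i) 1) v* part_S W \<sigma> 1 (\<sigma> j))"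
  proof -
    have S1: "part_S W \<sigma> (\<sigma> i) 1 = transpose (G i) ** G a1" for i
      using S_eq[of i a1] a1 unfolding G_def by simp
    have S2: "part_S W \<sigma> 1 (\<sigma> j) = transpose (G a1) ** G j"
      using S_eq[of a1 j] a1 unfolding G_def by simp
    have vm: "x v* M = transpose M *v x" for x :: "real^'d" and M :: "real^'d^'d" by simp
    have "(\<Sum>i\<in>UNIV. y 0 i v* part_S W \<sigma> (\<sigma> i) 1) = (\<Sum>i\<in>UNIV. transpose (G a1) *v (G i *v y 0 i))"
      by (intro sum.cong refl)
         (simp only: vm S1 matrix_transpose_mul transpose_transpose matrix_vector_mul_assoc)
    also have "\<dots> = transpose (G a1) *v V"
      unfolding V_def by (rule linear_sum[OF matrix_vector_mul_linear, symmetric])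
    finally have "(\<Sum>i\<in>UNIV. y 0 i v* part_S W \<sigma> (\<sigma> i) 1) v* part_S W \<sigma> 1 (\<sigma> j)
        = transpose (transpose (G a1) ** G j) *v (transpose (G a1) *v V)"
      by (simp only: vm S2)
    also have "\<dots> = (transpose (G j) ** (G a1 ** transpose (G a1))) *v V"
      by (simp only: matrix_transpose_mul transpose_transpose matrix_vector_mul_assoc matrix_mul_assoc)
    also have "\<dots> = transpose (G j) *v V"
      unfolding G_def G_orth' matrix_mul_rid ..
    finally show ?thesis by (simp add: matrix_vector_mult_scaleR)
  qed
  ultimately show "(\<lambda>t. y t j) \<longlonglongrightarrow> (deg W j / (\<Sum>k\<in>UNIV. deg W k)) *\<^sub>R
             ((\<Sum>i\<in>UNIV. y 0 i v* part_S W \<sigma> (\<sigma> i) 1) v* part_S W \<sigma> 1 (\<sigma> j))"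
    unfolding c_def by simp
qed

end

theorem proposition4:
  fixes W :: "'n::finite \<Rightarrow> 'n \<Rightarrow> real^'d::finite^'d"
    and \<sigma> :: "'n \<Rightarrow> nat" and lp :: nat
    and y :: "nat \<Rightarrow> 'n \<Rightarrow> real^'d"
  assumes "mwn_sym W"
    and "mwn_connected W"
    and "coherent W"
    and "\<not> mwn_bipartite W"
    and "coherent_partition W \<sigma> lp"
    and "\<forall>t j. y (Suc t) j = (\<Sum>i\<in>UNIV. (1 / deg W i) *\<^sub>R (transpose (W i j) *v y t i))"
  shows "\<forall>j. (\<lambda>t. y t j) \<longlonglongrightarrow>
           (deg W j / (\<Sum>k\<in>UNIV. deg W k)) *\<^sub>R
             ((\<Sum>i\<in>UNIV. y 0 i v* part_S W \<sigma> (\<sigma> i) 1) v* part_S W \<sigma> 1 (\<sigma> j))"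
  by (rule main[OF assms(1) assms(5) assms(2) assms(4) assms(6)])

end
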